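(* Let $p$ be a prime, $k\ge2$, and let $\partial_{k+1}$, $u_1$, $y_1$ be as in the context. Then, up to a unit, there is an element $x$ of lower filtration than $[p,g_1^2+kg_1+1]$ such that $$\partial_{k+1}\big([p,g_1^2+kg_1+1]+u_1^{-1}y_1[1,g_1^2+(k+1)g_1+1]\big)=u\,p\,v^{kg_1}[p,g_1^2+1]+\partial_{k+1}(x)$$ for some unit $u\in ku_*$.
   Context: Fix a prime $p$; $ku_*=\mathbb{Z}_{(p)}[v]$, $v$ of degree 2; $g_1=p-1$. For $m\ge1$, $0\le t\le p^m-1$, let $a_{t,m}=\binom{p^m}{t+1}v^t$. The reduced $ku_*(\mathbb{Z}_{p^2})$ is the $ku_*$-module generated by $e_j$ ($j\ge1$) with relations $\sum_{t=0}^{p^2-1}a_{t,2}e_{j-t}=0$ for all $j\ge1$ ($e_h=0$ for $h\le0$). $F$ is the free $ku_*$-module on $\alpha_i$, $i\ge1$ ($\alpha_h=0$ for $h\le0$); $[i,j]=\alpha_i\otimes e_j\in F\otimes_{ku_*}ku_*(\mathbb{Z}_{p^2})$, zero if $i\le0$ or $j\le0$. The $ku_*$-linear map $\partial_{k+1}$ on $F\otimes_{ku_*}ku_*(\mathbb{Z}_{p^2})$ is $\partial_{k+1}([i,j])=\sum_{t=0}^{p^{k+1}-1}a_{t,k+1}[i-t,j]$. Units: $u_1=\binom{p^2}{p}/p$ and $y_1=\binom{p^{k+1}}{p}/p^k$ (units of $\mathbb{Z}_{(p)}$), so $a_{g_1,2}=u_1pv^{g_1}$ and $a_{g_1,k+1}=y_1p^kv^{g_1}$.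 Filtration: $c[i,j]$ has filtration $i(p^{k+1}+1)+j(p^k+1)$; an element is of lower filtration than $[a,b]$ if it is a $ku_*$-linear combination of elements $[i,j]$ of strictly smaller filtration. *)

theory Defs
  imports "HOL-Computational_Algebra.Polynomial" "HOL-Computational_Algebra.Primes"
begin

text \<open>ku_* = Z_(p)[v] is modelled inside rat poly (variable = v) as the polynomials
all of whose coefficients lie in Z_(p).  Elements of F (x) ku_*(Z_{p^2}) are represented
by finitely supported coefficient functions on pairs (i,j), the pair standing for [i,j];
pairs with i = 0 or j = 0 stand for zero.  Equality in F (x) ku_*(Z_{p^2}) is equality
modulo the ku_*-submodule generated by the relations.\<close>

type_synonym elt = "nat \<times> nat \<Rightarrow> rat poly"

definition inZp :: "nat \<Rightarrow> rat \<Rightarrow> bool" where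
  "inZp p q = coprime (snd (quotient_of q)) (int p)"

definition unitZp :: "nat \<Rightarrow> rat \<Rightarrow> bool" where
  "unitZp p q = (q \<noteq> 0 \<and> inZp p q \<and> inZp p (inverse q))"

definition inKu :: "nat \<Rightarrow> rat poly \<Rightarrow> bool" where
  "inKu p c = (\<forall>n. inZp p (coeff c n))"

definition br :: "nat \<Rightarrow> nat \<Rightarrow> elt" where
  "br i j = (\<lambda>x. if i = 0 \<or> j = 0 then 0 else if x = (i, j) then 1 else 0)"

definition acoef :: "nat \<Rightarrow> nat \<Rightarrow> nat \<Rightarrow> rat poly" where
  "acoef p t m = monom (of_nat ((p ^ m) choose (t + 1))) t"

definition relem :: "nat \<Rightarrow> nat \<Rightarrow> nat \<Rightarrow> elt" where
  "relem p i j = (\<lambda>x. \<Sum>t<p ^ 2. acoef p t 2 * br i (j - t) x)"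

definition relations :: "nat \<Rightarrow> elt set" where
  "relations p = {f. \<exists>S c. finite S \<and> (\<forall>ij\<in>S. inKu p (c ij)) \<and>
      f = (\<lambda>x. \<Sum>ij\<in>S. c ij * relem p (fst ij) (snd ij) x)}"

definition eqM :: "nat \<Rightarrow> elt \<Rightarrow> elt \<Rightarrow> bool" where
  "eqM p f g = ((\<lambda>x. f x - g x) \<in> relations p)"

text \<open>the boundary map partial_{k+1}([i,j]) = sum_{t<p^{k+1}} a_{t,k+1} [i-t, j],
  written on coefficient functions\<close>
definition bd :: "nat \<Rightarrow> nat \<Rightarrow> elt \<Rightarrow> elt" where
  "bd p k f = (\<lambda>(i, j). if i = 0 \<or> j = 0 then 0
       else \<Sum>t<p ^ (k + 1). acoef p t (k + 1) * f (i + t, j))"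

definition filt :: "nat \<Rightarrow> nat \<Rightarrow> nat \<Rightarrow> nat \<Rightarrow> nat" where
  "filt p k i j = i * (p ^ (k + 1) + 1) + j * (p ^ k + 1)"

definition lower_filt :: "nat \<Rightarrow> nat \<Rightarrow> elt \<Rightarrow> nat \<Rightarrow> nat \<Rightarrow> bool" where
  "lower_filt p k f a b = (finite {x. f x \<noteq> 0} \<and> (\<forall>x. inKu p (f x)) \<and>
     (\<forall>i j. f (i, j) \<noteq> 0 \<longrightarrow> 1 \<le> i \<and> 1 \<le> j \<and> filt p k i j < filt p k a b))"

end

theory Submission
  imports Defs
begin



lemma inZp_iff:
  "inZp p q \<longleftrightarrow> (\<exists>a b. b > 0 \<and> coprime b (int p) \<and> q = of_int a / of_int b)"
proof
  assume "inZp p q"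
  obtain a b where ab: "quotient_of q = (a, b)" by (cases "quotient_of q")
  then have "b > 0" "q = of_int a / of_int b" using quotient_of_denom_pos quotient_of_div by blast+
  moreover have "coprime b (int p)" using \<open>inZp p q\<close> ab by (simp add: inZp_def)
  ultimately show "\<exists>a b. b > 0 \<and> coprime b (int p) \<and> q = of_int a / of_int b" by blast
next
  assume "\<exists>a b. b > 0 \<and> coprime b (int p) \<and> q = of_int a / of_int b"
  then obtain a b where b: "b > 0" "coprime b (int p)" "q = of_int a / of_int b" by blast
  obtain n d where nd: "quotient_of q = (n, d)" by (cases "quotient_of q")
  have d: "d > 0" "q = of_int n / of_int d" "coprime n d"
    using nd quotient_of_denom_pos quotient_of_div quotient_of_coprime by blast+
  have "of_int a / of_int b = (of_int n / of_int d :: rat)" using b d by simp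
  then have "of_int (a * d) = (of_int (n * b) :: rat)" using b(1) d(1)
    by (simp add: field_simps)
  then have "a * d = n * b" by linarith
  then have "d dvd n * b" by (metis dvd_triv_right)
  then have "d dvd b" using d(3) by (metis coprime_commute coprime_dvd_mult_right_iff)
  then have "coprime d (int p)" using b(2) by (meson coprime_imp_coprime dvd_trans)
  then show "inZp p q" using nd by (simp add: inZp_def)
qed

lemma inZp_int[simp]: "inZp p (of_int n)"
  by (simp add: inZp_def)
lemma inZp_nat[simp]: "inZp p (of_nat n)"
  by (simp add: inZp_def)
lemma inZp_0[simp]: "inZp p 0"
  by (simp add: inZp_def)
lemma inZp_1[simp]: "inZp p 1"
  by (simp add: inZp_def)

lemma inZp_add: assumes "inZp p x" "inZp p y" shows "inZp p (x + y)"
proof -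
  obtain a b c d where ab: "b > 0" "coprime b (int p)" "x = of_int a / of_int b"
     and cd: "d > 0" "coprime d (int p)" "y = of_int c / of_int d"
    using assms inZp_iff by metis
  have "x + y = of_int (a*d + c*b) / of_int (b*d)" using ab cd by (simp add: field_simps)
  moreover have "b*d > 0" "coprime (b*d) (int p)" using ab cd by auto
  ultimately show ?thesis using inZp_iff by blast
qed

lemma inZp_mult: assumes "inZp p x" "inZp p y" shows "inZp p (x * y)"
proof -
  obtain a b c d where ab: "b > 0" "coprime b (int p)" "x = of_int a / of_int b"
     and cd: "d > 0" "coprime d (int p)" "y = of_int c / of_int d"
    using assms inZp_iff by metis
  have "x * y = of_int (a*c) / of_int (b*d)" using ab cd by (simp add: field_simps)
  moreover have "b*d > 0" "coprime (b*d) (int p)" using ab cd by auto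
  ultimately show ?thesis using inZp_iff by blast
qed

lemma inZp_uminus: assumes "inZp p x" shows "inZp p (- x)"
proof -
  have "- x = of_int (-1) * x" by simp
  then show ?thesis using inZp_mult[OF inZp_int[of p "-1"] assms] by simp
qed

lemma inZp_power: assumes "inZp p x" shows "inZp p (x ^ n)"
  by (induction n) (auto intro: inZp_mult assms)

lemma inZp_inv_int: assumes "prime p" "\<not> int p dvd n" shows "inZp p (1 / of_int n)"
proof -
  have n0: "n \<noteq> 0" using assms by auto
  have pr: "prime (int p)" using assms(1) by simp
  have "coprime (int p) n" using prime_imp_coprime[OF pr assms(2)] .
  then have "coprime \<bar>n\<bar> (int p)" by (simp add: coprime_commute)
  moreover have "(1::rat) / of_int n = of_int (sgn n) / of_int \<bar>n\<bar>"
    using n0 by (cases "n > 0") (auto simp: field_simps)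
  moreover have "\<bar>n\<bar> > 0" using n0 by simp
  ultimately show ?thesis using inZp_iff by blast
qed




lemma binom_pow_dvd:
  assumes "prime p" "0 < j" "\<not> p dvd j"
  shows "p ^ m dvd (p ^ m choose j)"
proof -
  have e: "j * (p ^ m choose j) = p ^ m * ((p ^ m - 1) choose (j - 1))"
    using times_binomial_minus1_eq[OF assms(2)] .
  have "coprime (p ^ m) j"
    using assms by (simp add: prime_imp_coprime coprime_power_left_iff)
  moreover have "p ^ m dvd j * (p ^ m choose j)" using e by simp
  ultimately show ?thesis by (simp add: coprime_dvd_mult_right_iff)
qed

lemma binom_p2_mult_dvd:
  assumes "prime p" "0 < m" "m < p"
  shows "p dvd (p ^ 2 choose (m * p))"
proof -
  have pos: "0 < m * p" using assms prime_gt_0_nat by simp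
  have e: "(m * p) * (p ^ 2 choose (m * p)) = p ^ 2 * ((p ^ 2 - 1) choose (m * p - 1))"
    using times_binomial_minus1_eq[OF pos] .
  then have "p * (m * (p ^ 2 choose (m * p))) = p * (p * ((p ^ 2 - 1) choose (m * p - 1)))"
    by (simp add: power2_eq_square algebra_simps)
  then have "m * (p ^ 2 choose (m * p)) = p * ((p ^ 2 - 1) choose (m * p - 1))"
    using assms(1) prime_gt_0_nat by simp
  then have "p dvd m * (p ^ 2 choose (m * p))" by (metis dvd_triv_left)
  moreover have "\<not> p dvd m" using assms by (auto dest: dvd_imp_le)
  ultimately show ?thesis using assms(1) by (simp add: prime_dvd_mult_iff)
qed

lemma binom_pk_p:
  assumes "prime p"
  shows "(p ^ (Suc k) choose p) = p ^ k * ((p ^ Suc k - 1) choose (p - 1))"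
proof -
  have pos: "0 < p" using assms prime_gt_0_nat by simp
  have "p * (p ^ Suc k choose p) = p ^ Suc k * ((p ^ Suc k - 1) choose (p - 1))"
    using times_binomial_minus1_eq[OF pos] .
  then have "p * (p ^ Suc k choose p) = p * (p ^ k * ((p ^ Suc k - 1) choose (p - 1)))"
    by (metis mult.assoc power_Suc)
  then show ?thesis using pos by auto
qed

lemma binom_u1_ndvd:
  assumes "prime p"
  shows "\<not> p dvd ((p ^ 2 - 1) choose (p - 1))"
proof -
  let ?n = "p ^ 2 - 1"
  have p2: "p \<ge> 2" using assms prime_ge_2_nat by simp
  have "\<forall>j. j \<le> p - 1 \<longrightarrow> \<not> p dvd (?n choose j)"
  proof (intro allI impI)
    fix j assume "j \<le> p - 1"
    then show "\<not> p dvd (?n choose j)"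
    proof (induction j)
      case 0 then show ?case using p2 by simp
    next
      case (Suc j)
      have IH: "\<not> p dvd (?n choose j)" using Suc by simp
      have e1: "Suc j * (?n choose Suc j) = ?n * ((?n - 1) choose j)"
        using times_binomial_minus1_eq[of "Suc j" ?n] by simp
      have e2: "(?n - j) * (?n choose j) = ?n * ((?n - 1) choose j)"
        using binomial_absorb_comp .
      have e: "Suc j * (?n choose Suc j) = (?n - j) * (?n choose j)" using e1 e2 by simp
      have jlt: "Suc j < p" using Suc.prems p2 by simp
      have pp: "p * p = p ^ 2" by (simp add: power2_eq_square)
      have "\<not> p dvd (?n - j)"
      proof
        assume "p dvd (?n - j)"
        moreover have "?n - j + Suc j = p * p"
        proof -
          have "p \<le> p * p" by simp
          then show ?thesis using jlt unfolding pp[symmetric] by linarith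
        qed
        ultimately have "p dvd Suc j"
          by (metis dvd_add_right_iff dvd_triv_left)
        then show False using jlt by (auto dest: dvd_imp_le)
      qed
      then have "\<not> p dvd (?n - j) * (?n choose j)" using IH assms by (simp add: prime_dvd_mult_iff)
      then have "\<not> p dvd Suc j * (?n choose Suc j)" using e by simp
      then show ?case by (metis dvd_mult)
    qed
  qed
  then show ?thesis by simp
qed




definition mnm :: "rat \<Rightarrow> nat \<Rightarrow> nat \<Rightarrow> nat \<Rightarrow> elt" where
  "mnm c e i j = (\<lambda>z. monom c e * br i j z)"

definition Gs :: "nat \<Rightarrow> nat \<Rightarrow> nat \<Rightarrow> nat \<Rightarrow> elt set" where
  "Gs p k a b = {f. \<exists>x. lower_filt p k x a b \<and> (\<lambda>z. f z - bd p k x z) \<in> relations p}"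

lemma inKu_0[simp]: "inKu p 0" by (simp add: inKu_def)

lemma inKu_add: "inKu p a \<Longrightarrow> inKu p b \<Longrightarrow> inKu p (a + b)"
  by (simp add: inKu_def inZp_add)

lemma inKu_monom_mult: "inZp p c \<Longrightarrow> inKu p q \<Longrightarrow> inKu p (monom c d * q)"
  by (simp add: inKu_def coeff_monom_mult inZp_mult)

lemma inKu_monom: "inZp p c \<Longrightarrow> inKu p (monom c d)"
  by (simp add: inKu_def coeff_monom)

lemma br_zero_left[simp]: "br 0 j = (\<lambda>z. 0)" by (simp add: br_def)
lemma br_zero_right[simp]: "br i 0 = (\<lambda>z. 0)" by (simp add: br_def)

lemma inKu_br: "inKu p (br i j z)" by (simp add: br_def inKu_def coeff_1)

lemma rel_zero: "(\<lambda>z. 0) \<in> relations p"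
  unfolding relations_def by (rule CollectI, rule exI[of _ "{}"]) auto

lemma rel_add:
  assumes "f \<in> relations p" "g \<in> relations p"
  shows "(\<lambda>z. f z + g z) \<in> relations p"
proof -
  obtain S1 c1 where 1: "finite S1" "\<forall>ij\<in>S1. inKu p (c1 ij)"
      "f = (\<lambda>x. \<Sum>ij\<in>S1. c1 ij * relem p (fst ij) (snd ij) x)"
    using assms(1) unfolding relations_def by blast
  obtain S2 c2 where 2: "finite S2" "\<forall>ij\<in>S2. inKu p (c2 ij)"
      "g = (\<lambda>x. \<Sum>ij\<in>S2. c2 ij * relem p (fst ij) (snd ij) x)"
    using assms(2) unfolding relations_def by blast
  define c where "c ij = (if ij \<in> S1 then c1 ij else 0) + (if ij \<in> S2 then c2 ij else 0)" for ij
  have fin: "finite (S1 \<union> S2)" using 1 2 by simp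
  have ku: "\<forall>ij\<in>S1 \<union> S2. inKu p (c ij)" using 1 2 by (simp add: c_def inKu_add)
  have "(\<lambda>z. f z + g z) = (\<lambda>x. \<Sum>ij\<in>S1 \<union> S2. c ij * relem p (fst ij) (snd ij) x)"
  proof
    fix x
    have "(\<Sum>ij\<in>S1 \<union> S2. c ij * relem p (fst ij) (snd ij) x)
       = (\<Sum>ij\<in>S1 \<union> S2. (if ij \<in> S1 then c1 ij * relem p (fst ij) (snd ij) x else 0))
       + (\<Sum>ij\<in>S1 \<union> S2. (if ij \<in> S2 then c2 ij * relem p (fst ij) (snd ij) x else 0))"
    proof -
      have "(\<Sum>ij\<in>S1 \<union> S2. c ij * relem p (fst ij) (snd ij) x)
         = (\<Sum>ij\<in>S1 \<union> S2. (if ij \<in> S1 then c1 ij * relem p (fst ij) (snd ij) x else 0)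
            + (if ij \<in> S2 then c2 ij * relem p (fst ij) (snd ij) x else 0))"
        by (rule sum.cong) (auto simp: c_def distrib_right)
      then show ?thesis by (simp add: sum.distrib)
    qed
    also have "\<dots> = f x + g x"
    proof -
      have a: "(S1 \<union> S2) \<inter> S1 = S1" "(S1 \<union> S2) \<inter> S2 = S2" by auto
      show ?thesis unfolding sum.inter_restrict[OF fin, symmetric] a using 1 2 by simp
    qed
    finally show "f x + g x = (\<Sum>ij\<in>S1 \<union> S2. c ij * relem p (fst ij) (snd ij) x)" by simp
  qed
  then show ?thesis unfolding relations_def
    apply (intro CollectI exI[of _ "S1 \<union> S2"] exI[of _ c] conjI)
    using fin ku by auto
qed

lemma rel_smul:
  assumes "f \<in> relations p" "inZp p c"
  shows "(\<lambda>z. monom c d * f z) \<in> relations p"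
proof -
  obtain S1 c1 where 1: "finite S1" "\<forall>ij\<in>S1. inKu p (c1 ij)"
      "f = (\<lambda>x. \<Sum>ij\<in>S1. c1 ij * relem p (fst ij) (snd ij) x)"
    using assms(1) unfolding relations_def by blast
  have "(\<lambda>z. monom c d * f z) = (\<lambda>x. \<Sum>ij\<in>S1. (monom c d * c1 ij) * relem p (fst ij) (snd ij) x)"
    using 1 by (simp add: sum_distrib_left mult.assoc)
  moreover have "\<forall>ij\<in>S1. inKu p (monom c d * c1 ij)" using 1 assms(2) by (simp add: inKu_monom_mult)
  ultimately show ?thesis unfolding relations_def
    apply (intro CollectI exI[of _ S1] exI[of _ "\<lambda>ij. monom c d * c1 ij"] conjI)
    using 1 by auto
qed

lemma rel_relem:
  assumes "inZp p c"
  shows "(\<lambda>z. monom c d * relem p i j z) \<in> relations p"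
proof -
  have "(\<lambda>z. monom c d * relem p i j z) = (\<lambda>x. \<Sum>ij\<in>{(i,j)}. monom c d * relem p (fst ij) (snd ij) x)"
    by simp
  then show ?thesis unfolding relations_def
    apply (intro CollectI exI[of _ "{(i,j)}"] exI[of _ "\<lambda>ij. monom c d"] conjI)
    using assms inKu_monom by auto
qed

lemma lf_zero: "lower_filt p k (\<lambda>z. 0) a b"
  by (simp add: lower_filt_def)

lemma lf_add:
  assumes "lower_filt p k x a b" "lower_filt p k y a b"
  shows "lower_filt p k (\<lambda>z. x z + y z) a b"
proof -
  have "{z. x z + y z \<noteq> 0} \<subseteq> {z. x z \<noteq> 0} \<union> {z. y z \<noteq> 0}" by auto
  then have "finite {z. x z + y z \<noteq> 0}" using assms unfolding lower_filt_def
    by (meson finite_Un finite_subset)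
  moreover have "\<forall>z. inKu p (x z + y z)" using assms unfolding lower_filt_def by (simp add: inKu_add)
  moreover have "\<forall>i j. x (i, j) + y (i, j) \<noteq> 0 \<longrightarrow> 1 \<le> i \<and> 1 \<le> j \<and> filt p k i j < filt p k a b"
  proof (intro allI impI)
    fix i j assume "x (i, j) + y (i, j) \<noteq> 0"
    then have "x (i, j) \<noteq> 0 \<or> y (i, j) \<noteq> 0" by auto
    then show "1 \<le> i \<and> 1 \<le> j \<and> filt p k i j < filt p k a b"
      using assms unfolding lower_filt_def by blast
  qed
  ultimately show ?thesis unfolding lower_filt_def by blast
qed

lemma lf_smul:
  assumes "lower_filt p k x a b" "inZp p c"
  shows "lower_filt p k (\<lambda>z. monom c d * x z) a b"
proof -
  have "{z. monom c d * x z \<noteq> 0} \<subseteq> {z. x z \<noteq> 0}" by auto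
  then have "finite {z. monom c d * x z \<noteq> 0}" using assms unfolding lower_filt_def
    by (meson finite_subset)
  moreover have "\<forall>z. inKu p (monom c d * x z)" using assms unfolding lower_filt_def by (simp add: inKu_monom_mult)
  moreover have "\<forall>i j. monom c d * x (i, j) \<noteq> 0 \<longrightarrow> 1 \<le> i \<and> 1 \<le> j \<and> filt p k i j < filt p k a b"
  proof (intro allI impI)
    fix i j assume "monom c d * x (i, j) \<noteq> 0"
    then have "x (i, j) \<noteq> 0" by auto
    then show "1 \<le> i \<and> 1 \<le> j \<and> filt p k i j < filt p k a b"
      using assms unfolding lower_filt_def by blast
  qed
  ultimately show ?thesis unfolding lower_filt_def by blast
qed

lemma lf_br:
  assumes "1 \<le> i" "1 \<le> j" "filt p k i j < filt p k a b"
  shows "lower_filt p k (br i j) a b"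
proof -
  have "{z. br i j z \<noteq> 0} \<subseteq> {(i,j)}" by (auto simp: br_def split: if_splits)
  then have "finite {z. br i j z \<noteq> 0}" using finite_subset by blast
  moreover have "\<forall>z. inKu p (br i j z)" by (simp add: inKu_br)
  moreover have "\<forall>i' j'. br i j (i', j') \<noteq> 0 \<longrightarrow> 1 \<le> i' \<and> 1 \<le> j' \<and> filt p k i' j' < filt p k a b"
    using assms by (auto simp: br_def split: if_splits)
  ultimately show ?thesis unfolding lower_filt_def by blast
qed

lemma bd_add: "bd p k (\<lambda>z. f z + g z) = (\<lambda>z. bd p k f z + bd p k g z)"
  by (auto simp: bd_def fun_eq_iff sum.distrib distrib_left)

lemma bd_smul: "bd p k (\<lambda>z. c * f z) = (\<lambda>z. c * bd p k f z)"
  by (auto simp: bd_def fun_eq_iff sum_distrib_left ac_simps)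

lemma bd_zero: "bd p k (\<lambda>z. 0) = (\<lambda>z. 0)"
  by (auto simp: bd_def fun_eq_iff)

lemma G_rel: "f \<in> relations p \<Longrightarrow> f \<in> Gs p k a b"
  unfolding Gs_def using lf_zero[of p k a b] bd_zero[of p k] by auto

lemma G_zero: "(\<lambda>z. 0) \<in> Gs p k a b"
  using G_rel rel_zero by blast

lemma G_bd: "lower_filt p k x a b \<Longrightarrow> bd p k x \<in> Gs p k a b"
  unfolding Gs_def using rel_zero by auto

lemma G_add:
  assumes "f \<in> Gs p k a b" "g \<in> Gs p k a b"
  shows "(\<lambda>z. f z + g z) \<in> Gs p k a b"
proof -
  obtain x where x: "lower_filt p k x a b" "(\<lambda>z. f z - bd p k x z) \<in> relations p"
    using assms(1) unfolding Gs_def by blast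
  obtain y where y: "lower_filt p k y a b" "(\<lambda>z. g z - bd p k y z) \<in> relations p"
    using assms(2) unfolding Gs_def by blast
  have "(\<lambda>z. (f z + g z) - bd p k (\<lambda>z. x z + y z) z)
       = (\<lambda>z. (f z - bd p k x z) + (g z - bd p k y z))"
    by (simp add: bd_add fun_eq_iff)
  then have "(\<lambda>z. (f z + g z) - bd p k (\<lambda>z. x z + y z) z) \<in> relations p"
    using rel_add[OF x(2) y(2)] by simp
  then show ?thesis unfolding Gs_def using lf_add[OF x(1) y(1)] by blast
qed

lemma G_smul:
  assumes "f \<in> Gs p k a b" "inZp p c"
  shows "(\<lambda>z. monom c d * f z) \<in> Gs p k a b"
proof -
  obtain x where x: "lower_filt p k x a b" "(\<lambda>z. f z - bd p k x z) \<in> relations p"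
    using assms(1) unfolding Gs_def by blast
  have b: "bd p k (\<lambda>z. monom c d * x z) = (\<lambda>z. monom c d * bd p k x z)" by (rule bd_smul)
  have "(\<lambda>z. monom c d * f z - bd p k (\<lambda>z. monom c d * x z) z)
       = (\<lambda>z. monom c d * (f z - bd p k x z))"
    unfolding b by (simp add: fun_eq_iff right_diff_distrib)
  then have "(\<lambda>z. monom c d * f z - bd p k (\<lambda>z. monom c d * x z) z) \<in> relations p"
    using rel_smul[OF x(2) assms(2)] by simp
  then show ?thesis unfolding Gs_def using lf_smul[OF x(1) assms(2)] by blast
qed

lemma G_neg:
  assumes "f \<in> Gs p k a b"
  shows "(\<lambda>z. - f z) \<in> Gs p k a b"
proof -
  have "(\<lambda>z. - f z) = (\<lambda>z. monom (-1) 0 * f z)"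
    by (simp add: fun_eq_iff monom_0)
  then show ?thesis using G_smul[OF assms, of "-1" 0] inZp_int[of p "-1"] by simp
qed

lemma G_diff:
  assumes "f \<in> Gs p k a b" "g \<in> Gs p k a b"
  shows "(\<lambda>z. f z - g z) \<in> Gs p k a b"
  using G_add[OF assms(1) G_neg[OF assms(2)]] by simp

lemma G_sum:
  assumes "finite T" "\<And>t. t \<in> T \<Longrightarrow> g t \<in> Gs p k a b"
  shows "(\<lambda>z. \<Sum>t\<in>T. g t z) \<in> Gs p k a b"
  using assms
proof (induction T rule: finite_induct)
  case empty then show ?case by (simp add: G_zero)
next
  case (insert t T)
  then have "(\<lambda>z. g t z + (\<Sum>t\<in>T. g t z)) \<in> Gs p k a b" by (intro G_add) auto
  then show ?case using insert by simp
qed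

lemma G_eq: "f \<in> Gs p k a b \<Longrightarrow> (\<And>z. f z = g z) \<Longrightarrow> g \<in> Gs p k a b"
proof -
  assume "f \<in> Gs p k a b" "\<And>z. f z = g z"
  then have "f = g" by (simp add: fun_eq_iff)
  then show ?thesis using \<open>f \<in> Gs p k a b\<close> by simp
qed

lemma G_mnm_scale:
  assumes "mnm c e i j \<in> Gs p k a b" "inZp p d"
  shows "mnm (d * c) e i j \<in> Gs p k a b"
proof -
  have "(\<lambda>z. monom d 0 * mnm c e i j z) \<in> Gs p k a b" by (rule G_smul[OF assms])
  moreover have "\<And>z. monom d 0 * mnm c e i j z = mnm (d * c) e i j z"
    by (simp add: mnm_def mult_monom mult.assoc[symmetric])
  ultimately show ?thesis by (rule G_eq)
qed

lemma mnm_zero[simp]: "mnm c e i 0 = (\<lambda>z. 0)" by (simp add: mnm_def)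




definition nu :: "nat \<Rightarrow> nat \<Rightarrow> nat" where
  "nu p t = (if t = p^2 - 1 then 0 else if p dvd (t+1) then 1 else 2)"

definition dd :: "nat \<Rightarrow> nat \<Rightarrow> nat" where
  "dd p t = (p^2 choose (t+1)) div p ^ (nu p t)"

lemma G_split:
  assumes "finite T" "t0 \<in> T" "(\<lambda>z. \<Sum>t\<in>T. g t z) \<in> Gs p k a b"
    "\<And>t. t \<in> T \<Longrightarrow> t \<noteq> t0 \<Longrightarrow> g t \<in> Gs p k a b"
  shows "g t0 \<in> Gs p k a b"
proof -
  have r: "(\<lambda>z. \<Sum>t\<in>T - {t0}. g t z) \<in> Gs p k a b"
    using assms by (intro G_sum) auto
  have "(\<lambda>z. (\<Sum>t\<in>T. g t z) - (\<Sum>t\<in>T - {t0}. g t z)) \<in> Gs p k a b"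
    using G_diff[OF assms(3) r] .
  moreover have "\<And>z. (\<Sum>t\<in>T. g t z) - (\<Sum>t\<in>T - {t0}. g t z) = g t0 z"
    using assms(1,2) by (simp add: sum.remove)
  ultimately show ?thesis by (rule G_eq)
qed

lemma rel_expand:
  "(\<lambda>z. monom c e * relem p i j z)
   = (\<lambda>z. \<Sum>t<p^2. mnm (c * of_nat (p^2 choose (t+1))) (e+t) i (j-t) z)"
  by (simp add: fun_eq_iff relem_def acoef_def mnm_def sum_distrib_left mult_monom mult.assoc[symmetric])

lemma G_relem: "inZp p c \<Longrightarrow> (\<lambda>z. monom c e * relem p i j z) \<in> Gs p k a b"
  using G_rel rel_relem by blast

context
  fixes p :: nat
  assumes pr: "prime p"
begin

lemma p2: "2 \<le> p" using pr prime_ge_2_nat by blast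

lemma psq: "p^2 - 1 = (p-1)*(p-1) + 2*(p-1)"
proof -
  obtain g where "p = g + 1" using p2 by (metis add.commute le_Suc_ex one_add_one add_le_imp_le_left Suc_eq_plus1 add_2_eq_Suc')
  then show ?thesis by (simp add: power2_eq_square algebra_simps)
qed

lemma nu_dd:
  assumes "t < p^2" "t \<noteq> p - 1"
  shows "p^2 choose (t+1) = dd p t * p ^ (nu p t)"
proof -
  have "p ^ (nu p t) dvd (p^2 choose (t+1))"
  proof (cases "t = p^2 - 1")
    case True then show ?thesis by (simp add: nu_def)
  next
    case False
    show ?thesis
    proof (cases "p dvd (t+1)")
      case True
      then obtain m where m: "t + 1 = p * m" by blast
      have "0 < m"
      proof (rule ccontr)
        assume "\<not> 0 < m" then have "m = 0" by simp
        then show False using m by simp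
      qed
      moreover have "m < p"
      proof (rule ccontr)
        assume "\<not> m < p" then have "p * p \<le> p * m" by simp
        then have "p^2 \<le> t + 1" using m by (simp add: power2_eq_square)
        then show False using assms(1) False by simp
      qed
      ultimately have "p dvd (p^2 choose (m * p))" using binom_p2_mult_dvd[OF pr] by blast
      then show ?thesis using m False True by (simp add: nu_def mult.commute)
    next
      case nd: False
      have "p^2 dvd (p^2 choose (t+1))" using binom_pow_dvd[OF pr _ nd] by simp
      then show ?thesis using nd False by (simp add: nu_def)
    qed
  qed
  then show ?thesis by (simp add: dd_def)
qed

lemma nu_cases:
  assumes "t < p^2" "t \<noteq> p - 1"
  shows "nu p t = 2 \<or> (nu p t = 1 \<and> 2*(p-1) + 1 \<le> t) \<or> (nu p t = 0 \<and> t = (p-1)*(p-1) + 2*(p-1))"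
proof (cases "t = p^2 - 1")
  case True then show ?thesis using psq by (simp add: nu_def)
next
  case False
  show ?thesis
  proof (cases "p dvd (t+1)")
    case True
    then obtain m where m: "t + 1 = p * m" by blast
    have "m \<noteq> 0"
    proof
      assume "m = 0" then show False using m by simp
    qed
    moreover have "m \<noteq> 1" using m assms(2) by auto
    ultimately have "2 \<le> m" by simp
    then have "p * 2 \<le> p * m" by simp
    then have "2 * p \<le> t + 1" using m by simp
    then show ?thesis using True False p2 by (simp add: nu_def)
  next
    case False
    then show ?thesis using \<open>t \<noteq> p^2 - 1\<close> by (simp add: nu_def)
  qed
qed

definition U1 :: nat where "U1 = ((p^2 - 1) choose (p - 1))"

lemma U1_prop: "(p^2 choose p) = p * U1" "\<not> p dvd U1"
proof -
  have pos: "0 < p" using p2 by simp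
  have e1: "p * (p^2 choose p) = p^2 * ((p^2 - 1) choose (p - 1))"
    using times_binomial_minus1_eq[OF pos] .
  have e2: "p^2 * ((p^2 - 1) choose (p - 1)) = p * (p * U1)"
    unfolding U1_def power2_eq_square by (rule mult.assoc)
  have eq: "p * (p^2 choose p) = p * (p * U1)" using e1 e2 by (rule trans)
  show "(p^2 choose p) = p * U1" using eq pos by (subst (asm) mult_left_cancel) auto
  show "\<not> p dvd U1" unfolding U1_def using binom_u1_ndvd[OF pr] .
qed

lemma u1_eq: "(of_nat (p^2 choose p) / of_nat p :: rat) = of_nat U1"
  using U1_prop(1) p2 by simp

lemma U1_pos: "U1 \<noteq> 0" using U1_prop(2) by (metis dvd_0_right)

lemma inv_u1: "inZp p (1 / of_nat U1)"
proof -
  have "\<not> int p dvd int U1" using U1_prop(2) by simp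
  then show ?thesis using inZp_inv_int[OF pr, of "int U1"] by simp
qed

end




lemma mu_lt1:
  fixes D D' A0 x x' :: nat
  assumes "D' \<le> D" "x' < x"
  shows "D' * (A0 + 1) + x' < D * (A0 + 1) + x"
proof -
  have "D' * (A0 + 1) \<le> D * (A0 + 1)" using assms(1) by (rule mult_le_mono1)
  then show ?thesis using assms(2) by linarith
qed

lemma mu_lt2:
  fixes D D' A0 x x' :: nat
  assumes "D' + 1 \<le> D" "x' \<le> A0" 
  shows "D' * (A0 + 1) + x' < D * (A0 + 1) + x"
proof -
  have "(D' + 1) * (A0 + 1) \<le> D * (A0 + 1)" using assms(1) by (rule mult_le_mono1)
  then have "D' * (A0 + 1) + (A0 + 1) \<le> D * (A0 + 1)" by (simp add: algebra_simps)
  then show ?thesis using assms(2) by linarith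
qed

context
  fixes p :: nat
  assumes pr: "prime p"
begin

lemma row_lemma:
  fixes i c0 A0 a0 b0 k :: nat
  assumes i1: "1 \<le> i" and c0: "c0 \<le> p - 1"
  and Hb: "\<And>e j. 1 \<le> j \<Longrightarrow> j + c0 \<le> A0*(p-1) + (p-1)*(p-1) \<Longrightarrow>
             mnm (of_nat p ^ A0) e i j \<in> Gs p k a0 b0"
  shows "a \<le> A0 \<Longrightarrow> (1 \<le> a \<or> j = 0) \<Longrightarrow> (p-1)*(A0 - a) \<le> e \<Longrightarrow>
         j + c0 \<le> a*(p-1) + (p-1)*(p-1) \<Longrightarrow> mnm (of_nat p ^ a) e i j \<in> Gs p k a0 b0"
proof -
  define g where "g = p - 1"
  have p2: "2 \<le> p" using p2[OF pr] .
  have pg: "p = g + 1" using p2 g_def by simp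
  have g1: "1 \<le> g" using p2 g_def by simp
  have psq': "p^2 - 1 = g*g + 2*g" using psq[OF pr] g_def by simp
  define mu where "mu a j = (A0*g + g*g + j - a*g)*(A0+1) + (A0 - a)" for a j :: nat
  define G where "G = Gs p k a0 b0"
  have main: "\<And>a j e. mu a j = n \<Longrightarrow> a \<le> A0 \<Longrightarrow> (1 \<le> a \<or> j = 0) \<Longrightarrow> g*(A0 - a) \<le> e \<Longrightarrow>
         j + c0 \<le> a*g + g*g \<Longrightarrow> mnm (of_nat p ^ a) e i j \<in> G" for n
  proof (induction n rule: less_induct)
    case (less n a j e)
    show ?case
    proof (cases "j = 0")
      case True then show ?thesis by (simp add: G_def G_zero)
    next
      case j0: False
      show ?thesis
      proof (cases "a = A0")
        case True
        then show ?thesis using Hb[of j e] less.prems j0 g_def G_def by simp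
      next
        case False
        then have aA: "a < A0" using less.prems by simp
        have a1: "1 \<le> a" using less.prems j0 by simp
        have "g * 1 \<le> g * (A0 - a)" using aA by (intro mult_le_mono2) simp
        then have "g \<le> g * (A0 - a)" by simp
        then have eg: "g \<le> e" using less.prems(4) by linarith
        define c where "c = (of_nat p ^ (a - 1) / of_nat (U1 p) :: rat)"
        have cZ: "inZp p c"
          unfolding c_def using inZp_mult[OF inZp_power[OF inZp_nat] inv_u1[OF pr]]
          by (simp add: divide_inverse)
        have rel: "(\<lambda>z. \<Sum>t<p^2. mnm (c * of_nat (p^2 choose (t+1))) (e - g + t) i (j + g - t) z) \<in> G"
          using G_relem[OF cZ, of "e - g" i "j + g" k a0 b0] unfolding rel_expand G_def .
        have gT: "g \<in> {..<p^2}" using pg by (simp add: power2_eq_square)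
        have others: "mnm (c * of_nat (p^2 choose (t+1))) (e - g + t) i (j + g - t) \<in> G"
          if t: "t \<in> {..<p^2}" "t \<noteq> g" for t
        proof (cases "j + g \<le> t")
          case True then show ?thesis by (simp add: G_def G_zero)
        next
          case jt: False
          have tl: "t < p^2" "t \<noteq> p - 1" using t g_def by auto
          have Ct: "p^2 choose (t+1) = dd p t * p ^ (nu p t)" using nu_dd[OF pr tl] .
          have coef: "c * of_nat (p^2 choose (t+1)) = (of_nat (dd p t) * (1 / of_nat (U1 p))) * of_nat p ^ (a - 1 + nu p t)"
            unfolding Ct c_def by (simp add: power_add field_simps)
          have dZ: "inZp p (of_nat (dd p t) * (1 / of_nat (U1 p)))"
            using inZp_mult[OF inZp_nat inv_u1[OF pr]] .
          have nc: "nu p t = 2 \<or> (nu p t = 1 \<and> 2*g + 1 \<le> t) \<or> (nu p t = 0 \<and> t = g*g + 2*g)"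
            using nu_cases[OF pr tl] g_def by simp
          have IHc: "mnm (of_nat p ^ (a - 1 + nu p t)) (e - g + t) i (j + g - t) \<in> G"
          proof -
            have "a - 1 + nu p t \<le> A0 \<and> (1 \<le> a - 1 + nu p t \<or> j + g - t = 0) \<and>
                  g * (A0 - (a - 1 + nu p t)) \<le> e - g + t \<and>
                  j + g - t + c0 \<le> (a - 1 + nu p t) * g + g * g \<and>
                  mu (a - 1 + nu p t) (j + g - t) < mu a j"
              using nc
            proof (elim disjE conjE)
              assume n2: "nu p t = 2"
              have e1: "(a - 1 + nu p t) = a + 1" using n2 a1 by simp
              have s1: "A0 - a = Suc (A0 - (a+1))" using aA by simp
              have "g * (A0 - a) = g * (A0 - (a+1)) + g" unfolding s1 by simp
              then have A: "g * (A0 - (a+1)) \<le> e - g + t" using less.prems eg by linarith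
              have B: "j + g - t + c0 \<le> (a+1) * g + g * g" using less.prems by (simp add: algebra_simps)
              have "A0 * g + g * g + (j + g - t) - (a+1) * g \<le> A0 * g + g * g + j - a * g"
                by (simp add: algebra_simps)
              then have C: "mu (a+1) (j + g - t) < mu a j" unfolding mu_def
                by (rule mu_lt1) (use aA in simp)
              show ?thesis unfolding e1 using A B C aA by simp
            next
              assume n1: "nu p t = 1" and tt: "2*g + 1 \<le> t"
              have e1: "(a - 1 + nu p t) = a" using n1 a1 by simp
              have A: "g * (A0 - a) \<le> e - g + t" using less.prems eg tt by linarith
              have B: "j + g - t + c0 \<le> a * g + g * g" using less.prems tt by linarith
              have ag: "a * g \<le> A0 * g" using aA by simp
              have "A0 * g + g * g + (j + g - t) - a * g + 1 \<le> A0 * g + g * g + j - a * g"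
                using tt jt ag by linarith
              then have C: "mu a (j + g - t) < mu a j" unfolding mu_def
                by (rule mu_lt2) simp
              show ?thesis unfolding e1 using A B C aA a1 by simp
            next
              assume n0: "nu p t = 0" and tt: "t = g*g + 2*g"
              have a2: "2 \<le> a"
              proof (rule ccontr)
                assume "\<not> 2 \<le> a" then have "a = 1" using a1 by simp
                then have "j + g \<le> t" using less.prems tt by simp
                then show False using jt by simp
              qed
              have e1: "(a - 1 + nu p t) = a - 1" using n0 by simp
              have am: "(a - 1) * g + g = a * g" using a2 by (cases a) auto
              have s1: "A0 - (a - 1) = Suc (A0 - a)" using aA a2 by simp
              have "g * (A0 - (a - 1)) = g * (A0 - a) + g" unfolding s1 by simp
              then have A: "g * (A0 - (a - 1)) \<le> e - g + t" using less.prems eg tt by linarith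
              have B: "j + g - t + c0 \<le> (a - 1) * g + g * g" using less.prems tt am jt by linarith
              have ag: "a * g \<le> A0 * g" using aA by simp
              have gg: "1 \<le> g * g" using g1 by simp
              have "A0 * g + g * g + (j + g - t) - (a - 1) * g + 1 \<le> A0 * g + g * g + j - a * g"
                using tt jt ag am gg by linarith
              then have C: "mu (a - 1) (j + g - t) < mu a j" unfolding mu_def
                by (rule mu_lt2) simp
              have D: "a - 1 \<le> A0" "1 \<le> a - 1" using aA a2 by linarith+
              show ?thesis unfolding e1 using A B C D by blast
            qed
            then show ?thesis using less.IH[OF _ refl] less.prems(1) by blast
          qed
          have "mnm ((of_nat (dd p t) * (1 / of_nat (U1 p))) * of_nat p ^ (a - 1 + nu p t)) (e - g + t) i (j + g - t) \<in> G"
            using G_mnm_scale[OF IHc[unfolded G_def] dZ] G_def by simp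
          then show ?thesis unfolding coef .
        qed
        have t0: "mnm (c * of_nat (p^2 choose (g+1))) (e - g + g) i (j + g - g) \<in> G"
          using G_split[OF _ gT rel[unfolded G_def]] others unfolding G_def by blast
        have "c * of_nat (p^2 choose (g+1)) = of_nat p ^ a"
        proof -
          have "p^2 choose (g+1) = p * U1 p" using U1_prop(1)[OF pr] pg by simp
          moreover have "(of_nat p :: rat) ^ (a - 1) * of_nat p = of_nat p ^ a" using a1
            by (metis Suc_diff_1 less_le_trans zero_less_one power_Suc2)
          ultimately show ?thesis unfolding c_def using U1_pos[OF pr] by (simp add: field_simps)
        qed
        then show ?thesis using t0 eg by simp
      qed
    qed
  qed
  assume "a \<le> A0" "(1 \<le> a \<or> j = 0)" "(p-1)*(A0 - a) \<le> e" "j + c0 \<le> a*(p-1) + (p-1)*(p-1)"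
  then show "mnm (of_nat p ^ a) e i j \<in> Gs p k a0 b0"
    using main[OF refl] unfolding g_def G_def by blast
qed

end



lemma bd_br:
  assumes "1 \<le> a" "a \<le> p^(k+1)"
  shows "bd p k (br a b) = (\<lambda>z. \<Sum>t<a. acoef p t (k+1) * br (a-t) b z)"
proof (rule ext, clarify)
  fix i j
  show "bd p k (br a b) (i,j) = (\<Sum>t<a. acoef p t (k+1) * br (a-t) b (i,j))"
  proof (cases "i = 0 \<or> j = 0")
    case True
    then show ?thesis by (auto simp: bd_def br_def intro!: sum.neutral)
  next
    case False
    have L: "bd p k (br a b) (i,j) = (\<Sum>t<p^(k+1). (if t = a - i then (if j = b \<and> i \<le> a then acoef p t (k+1) else 0) else 0))"
    proof -
      have "bd p k (br a b) (i,j) = (\<Sum>t<p^(k+1). acoef p t (k+1) * br a b (i+t, j))"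
        using False by (simp add: bd_def)
      also have "\<dots> = (\<Sum>t<p^(k+1). (if t = a - i then (if j = b \<and> i \<le> a then acoef p t (k+1) else 0) else 0))"
        using False assms(1) by (intro sum.cong refl) (auto simp: br_def)
      finally show ?thesis .
    qed
    have R: "(\<Sum>t<a. acoef p t (k+1) * br (a-t) b (i,j)) = (\<Sum>t<a. (if t = a - i then (if j = b \<and> i \<le> a then acoef p t (k+1) else 0) else 0))"
      using False by (intro sum.cong refl) (auto simp: br_def)
    have "a - i < p^(k+1)" "a - i < a" using assms False by auto
    then show ?thesis unfolding L R by simp
  qed
qed

lemma bd_mnm:
  assumes "1 \<le> a" "a \<le> p^(k+1)"
  shows "bd p k (mnm c e a b) = (\<lambda>z. \<Sum>t<a. mnm (c * of_nat (p^(k+1) choose (t+1))) (e + t) (a-t) b z)"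
proof -
  have "bd p k (mnm c e a b) = (\<lambda>z. monom c e * bd p k (br a b) z)"
    unfolding mnm_def by (rule bd_smul)
  then show ?thesis unfolding bd_br[OF assms]
    by (simp add: fun_eq_iff mnm_def acoef_def sum_distrib_left mult_monom mult.assoc[symmetric])
qed

lemma lf_mnm:
  assumes "inZp p c" "1 \<le> i" "1 \<le> j" "filt p k i j < filt p k a b"
  shows "lower_filt p k (mnm c e i j) a b"
  unfolding mnm_def using lf_smul[OF lf_br[OF assms(2-4)] assms(1)] .

lemma G_split2:
  assumes "finite T" "t0 \<in> T" "t1 \<in> T" "t0 \<noteq> t1" "(\<lambda>z. \<Sum>t\<in>T. g t z) \<in> Gs p k a b"
    "\<And>t. t \<in> T \<Longrightarrow> t \<noteq> t0 \<Longrightarrow> t \<noteq> t1 \<Longrightarrow> g t \<in> Gs p k a b"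
  shows "(\<lambda>z. g t0 z + g t1 z) \<in> Gs p k a b"
proof -
  have r: "(\<lambda>z. \<Sum>t\<in>T - {t0, t1}. g t z) \<in> Gs p k a b"
    using assms by (intro G_sum) auto
  have "(\<lambda>z. (\<Sum>t\<in>T. g t z) - (\<Sum>t\<in>T - {t0, t1}. g t z)) \<in> Gs p k a b"
    using G_diff[OF assms(5) r] .
  moreover have "\<And>z. (\<Sum>t\<in>T. g t z) - (\<Sum>t\<in>T - {t0, t1}. g t z) = g t0 z + g t1 z"
  proof -
    fix z
    have "(\<Sum>t\<in>T. g t z) = g t0 z + (\<Sum>t\<in>T - {t0}. g t z)" using assms(1,2) by (simp add: sum.remove)
    also have "(\<Sum>t\<in>T - {t0}. g t z) = g t1 z + (\<Sum>t\<in>T - {t0} - {t1}. g t z)"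
      using assms(1,3,4) by (subst sum.remove[of _ t1]) auto
    finally show "(\<Sum>t\<in>T. g t z) - (\<Sum>t\<in>T - {t0, t1}. g t z) = g t0 z + g t1 z"
      by (simp add: Diff_insert2[symmetric] insert_commute)
  qed
  ultimately show ?thesis by (rule G_eq)
qed




context
  fixes p k :: nat
  assumes pr: "prime p" and k2: "2 \<le> k"
begin

abbreviation "g \<equiv> p - 1"
abbreviation "NN \<equiv> (p-1)*(p-1) + k*(p-1) + 1"
abbreviation "GG \<equiv> Gs p k p NN"

lemma pg: "p = g + 1" using p2[OF pr] by simp
lemma g1: "1 \<le> g" using p2[OF pr] by simp

lemma filt_low:
  assumes "i \<le> p - 1" "j \<le> NN + g"
  shows "filt p k i j < filt p k p NN"
proof -
  define X where "X = p^k"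
  have pX: "p \<le> X" unfolding X_def using k2 p2[OF pr] by (intro self_le_power) auto
  have q: "p^(k+1) = g*X + X" unfolding X_def using pg by (metis add.commute mult.commute mult_Suc power_Suc Suc_eq_plus1)
  define Q where "Q = p^(k+1) + 1"
  define P where "P = X + 1"
  have f: "filt p k i j = i*Q + j*P" "filt p k p NN = p*Q + NN*P"
    unfolding filt_def Q_def P_def X_def by simp_all
  have 1: "i*Q \<le> g*Q" using assms(1) by (rule mult_le_mono1)
  have 2: "j*P \<le> (NN+g)*P" using assms(2) by (rule mult_le_mono1)
  have 3: "p*Q = g*Q + Q" using pg by (metis add.commute mult.commute mult_Suc_right Suc_eq_plus1)
  have 4: "(NN+g)*P = NN*P + g*P" by (simp add: algebra_simps)
  have 5: "g*P = g*X + g" unfolding P_def by (simp only: distrib_left mult_1_right)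
  have 6: "Q = g*X + X + 1" unfolding Q_def q ..
  have "g < X + 1" using pX pg by linarith
  then show ?thesis unfolding f using 1 2 3 4 5 6 by linarith
qed

lemma filt_top:
  assumes "j < NN"
  shows "filt p k p j < filt p k p NN"
proof -
  have "j*(p^k+1) < NN*(p^k+1)" by (rule mult_less_mono1) (use assms in simp_all)
  then show ?thesis unfolding filt_def by linarith
qed

lemma low_rows:
  "1 \<le> i \<Longrightarrow> i \<le> p - 1 \<Longrightarrow> 1 \<le> j \<Longrightarrow> j \<le> NN + g \<Longrightarrow>
   mnm (of_nat p ^ (k+1)) e i j \<in> GG"
proof (induction i arbitrary: e rule: less_induct)
  case (less i)
  have "p \<le> p^(k+1)" by (rule self_le_power) (use p2[OF pr] in auto)
  then have ip: "i \<le> p^(k+1)" using less.prems(2) by linarith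
  have "bd p k (mnm 1 e i j) \<in> GG"
    by (rule G_bd, rule lf_mnm) (use less.prems filt_low in auto)
  then have S: "(\<lambda>z. \<Sum>t<i. mnm (of_nat (p^(k+1) choose (t+1))) (e + t) (i-t) j z) \<in> GG"
    unfolding bd_mnm[OF less.prems(1) ip] by simp
  have others: "mnm (of_nat (p^(k+1) choose (t+1))) (e + t) (i-t) j \<in> GG" if t: "t \<in> {..<i}" "t \<noteq> 0" for t
  proof -
    have nd: "\<not> p dvd (t+1)" using t less.prems(2) by (auto dest: dvd_imp_le)
    obtain d where d: "p^(k+1) choose (t+1) = p^(k+1) * d"
      using binom_pow_dvd[OF pr _ nd, of "k+1"] by (auto elim: dvdE)
    have "mnm (of_nat p ^ (k+1)) (e+t) (i-t) j \<in> GG"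
      using t less.prems by (intro less.IH) auto
    then have "mnm (of_nat d * of_nat p ^ (k+1)) (e+t) (i-t) j \<in> GG"
      by (rule G_mnm_scale) simp
    then show ?thesis unfolding d by (simp add: mult.commute)
  qed
  have "mnm (of_nat (p^(k+1) choose (0+1))) (e + 0) (i-0) j \<in> GG"
    by (rule G_split[OF _ _ S]) (use less.prems others in auto)
  then show ?case by simp
qed

lemma row1:
  "a \<le> k+1 \<Longrightarrow> (1 \<le> a \<or> j = 0) \<Longrightarrow> g*(k+1-a) \<le> e \<Longrightarrow> j \<le> a*g + g*g \<Longrightarrow>
   mnm (of_nat p ^ a) e 1 j \<in> GG"
proof -
  assume as: "a \<le> k+1" "(1 \<le> a \<or> j = 0)" "g*(k+1-a) \<le> e" "j \<le> a*g + g*g"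
  have Hb: "mnm (of_nat p ^ (k+1)) e' 1 j' \<in> GG" if "1 \<le> j'" "j' + 0 \<le> (k+1)*g + g*g" for e' j'
  proof (rule low_rows)
    show "1 \<le> (1::nat)" by simp
    show "1 \<le> p - 1" using g1 .
    show "1 \<le> j'" using that by simp
    have "(k+1)*g = k*g + g" by simp
    then show "j' \<le> NN + g" using that by linarith
  qed
  have pp: "1 \<le> p" using p2[OF pr] by simp
  show ?thesis by (rule row_lemma[OF pr, of 1 0 "k+1", OF _ _ Hb]) (use as pp in \<open>auto simp: algebra_simps\<close>)
qed

lemma rowp_base:
  assumes "1 \<le> j" "j + g \<le> (k+1)*g + g*g"
  shows "mnm (of_nat p ^ (k+1)) e p j \<in> GG"
proof -
  have p1: "1 \<le> p" using p2[OF pr] by simp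
  have "p \<le> p^(k+1)" by (rule self_le_power) (use p2[OF pr] in auto)
  note bdm = bd_mnm[OF p1 this]
  have kg: "(k+1)*g = k*g + g" by simp
  have jN: "j < NN" using assms kg by linarith
  have "bd p k (mnm 1 e p j) \<in> GG"
    by (rule G_bd, rule lf_mnm) (use assms filt_top jN p1 in auto)
  then have S: "(\<lambda>z. \<Sum>t<p. mnm (of_nat (p^(k+1) choose (t+1))) (e + t) (p-t) j z) \<in> GG"
    unfolding bdm by simp
  have others: "mnm (of_nat (p^(k+1) choose (t+1))) (e + t) (p-t) j \<in> GG" if t: "t \<in> {..<p}" "t \<noteq> 0" for t
  proof (cases "t = g")
    case True
    have tp: "t + 1 = p" using True pg by simp
    have Y: "p^(k+1) choose p = p^k * ((p^(k+1) - 1) choose (p - 1))"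
      using binom_pk_p[OF pr, of k] by simp
    have "mnm (of_nat p ^ k) (e+g) 1 j \<in> GG"
      by (rule row1) (use assms k2 kg in auto)
    then have "mnm (of_nat ((p^(k+1) - 1) choose (p - 1)) * of_nat p ^ k) (e+g) 1 j \<in> GG"
      by (rule G_mnm_scale) simp
    moreover have "p - t = 1" using True pg by simp
    ultimately show ?thesis unfolding tp Y using True by (simp add: mult.commute)
  next
    case False
    have tl: "t + 1 < p" using t False pg by auto
    have nd: "\<not> p dvd (t+1)" using tl by (auto dest: dvd_imp_le)
    obtain d where d: "p^(k+1) choose (t+1) = p^(k+1) * d"
      using binom_pow_dvd[OF pr _ nd, of "k+1"] by (auto elim: dvdE)
    have "p - t \<le> p - 1" using t by simp
    have "1 \<le> p - t" using tl by simp
    have "mnm (of_nat p ^ (k+1)) (e+t) (p-t) j \<in> GG"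
      by (rule low_rows) (use t tl jN assms \<open>p - t \<le> p - 1\<close> \<open>1 \<le> p - t\<close> in auto)
    then have "mnm (of_nat d * of_nat p ^ (k+1)) (e+t) (p-t) j \<in> GG"
      by (rule G_mnm_scale) simp
    then show ?thesis unfolding d by (simp add: mult.commute)
  qed
  have "mnm (of_nat (p^(k+1) choose (0+1))) (e + 0) (p-0) j \<in> GG"
    by (rule G_split[OF _ _ S]) (use p1 others in auto)
  then show ?thesis by simp
qed

lemma rowp:
  "a \<le> k+1 \<Longrightarrow> (1 \<le> a \<or> j = 0) \<Longrightarrow> g*(k+1-a) \<le> e \<Longrightarrow> j + g \<le> a*g + g*g \<Longrightarrow>
   mnm (of_nat p ^ a) e p j \<in> GG"
proof -
  assume as: "a \<le> k+1" "(1 \<le> a \<or> j = 0)" "g*(k+1-a) \<le> e" "j + g \<le> a*g + g*g"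
  have Hb: "mnm (of_nat p ^ (k+1)) e' p j' \<in> GG" if "1 \<le> j'" "j' + g \<le> (k+1)*g + g*g" for e' j'
    using rowp_base that by blast
  have p1: "1 \<le> p" using p2[OF pr] by simp
  show ?thesis by (rule row_lemma[OF pr, of p g "k+1", OF p1 _ Hb]) (use as p1 in \<open>auto simp: algebra_simps\<close>)
qed

lemma mainit:
  "i \<le> k \<Longrightarrow> (\<lambda>z. mnm (of_nat p ^ (k+1)) 0 p NN z
      - mnm ((- of_nat (U1 p)) ^ i * of_nat p ^ (k+1-i)) (i*g) p (NN - i*g) z) \<in> GG"
proof (induction i)
  case 0
  show ?case by (rule G_eq[OF G_zero]) simp
next
  case (Suc i)
  have ik: "i + 1 \<le> k" "i \<le> k" using Suc.prems by auto
  have IH: "(\<lambda>z. mnm (of_nat p ^ (k+1)) 0 p NN z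
      - mnm ((- of_nat (U1 p)) ^ i * of_nat p ^ (k+1-i)) (i*g) p (NN - i*g) z) \<in> GG"
    using Suc.IH ik by simp
  define a where "a = k + 1 - i"
  have a2: "2 \<le> a" using ik a_def by simp
  define c where "c = ((- of_nat (U1 p)) ^ i * of_nat p ^ (a - 2) :: rat)"
  have uZ: "inZp p ((- of_nat (U1 p)) ^ i)"
  proof -
    have "(- of_nat (U1 p) :: rat) = of_int (- int (U1 p))" by simp
    then show ?thesis using inZp_power[OF inZp_int, of p "- int (U1 p)" i] by simp
  qed
  have cZ: "inZp p c" unfolding c_def by (intro inZp_mult uZ inZp_power inZp_nat)
  define j where "j = NN - i*g"
  have rel: "(\<lambda>z. \<Sum>t<p^2. mnm (c * of_nat (p^2 choose (t+1))) (i*g + t) p (j - t) z) \<in> GG"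
    using G_relem[OF cZ, of "i*g" p j k p NN] unfolding rel_expand .
  define K where "K = k * g"
  define I where "I = i * g"
  have IK: "I \<le> K" unfolding I_def K_def using ik by (intro mult_le_mono1) simp
  have ag: "a * g = K + g - I" unfolding a_def K_def I_def by (simp add: diff_mult_distrib)
  have jdef: "j = g*g + K + 1 - I" unfolding j_def K_def I_def by simp
  have gg: "1 \<le> g * g" using g1 by simp
  have others: "mnm (c * of_nat (p^2 choose (t+1))) (i*g + t) p (j - t) \<in> GG"
    if t: "t \<in> {..<p^2}" "t \<noteq> 0" "t \<noteq> g" for t
  proof (cases "j \<le> t")
    case True then show ?thesis by (simp add: G_zero)
  next
    case jt: False
    have tl: "t < p^2" "t \<noteq> p - 1" using t by auto
    have Ct: "p^2 choose (t+1) = dd p t * p ^ (nu p t)" using nu_dd[OF pr tl] .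
    have coef: "c * of_nat (p^2 choose (t+1)) = ((- of_nat (U1 p)) ^ i * of_nat (dd p t)) * of_nat p ^ (a - 2 + nu p t)"
      unfolding Ct c_def by (simp add: power_add field_simps)
    have dZ: "inZp p ((- of_nat (U1 p)) ^ i * of_nat (dd p t))" by (intro inZp_mult uZ inZp_nat)
    have nc: "nu p t = 2 \<or> (nu p t = 1 \<and> 2*g + 1 \<le> t) \<or> (nu p t = 0 \<and> t = g*g + 2*g)"
      using nu_cases[OF pr tl] by simp
    have conds: "a - 2 + nu p t \<le> k + 1 \<and> (1 \<le> a - 2 + nu p t \<or> j - t = 0) \<and>
           g * (k + 1 - (a - 2 + nu p t)) \<le> i * g + t \<and>
           j - t + g \<le> (a - 2 + nu p t) * g + g * g"
        using nc
      proof (elim disjE conjE)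
        assume n2: "nu p t = 2"
        have e1: "a - 2 + nu p t = a" using n2 a2 by simp
        have e2: "k + 1 - a = i" using a_def ik by simp
        have t1: "1 \<le> t" using t by simp
        have X1: "a - 2 + nu p t \<le> k + 1" "1 \<le> a - 2 + nu p t \<or> j - t = 0" using e1 a_def a2 by auto
        have X2: "g * (k + 1 - (a - 2 + nu p t)) \<le> i * g + t" unfolding e1 e2 by simp
        have X3: "j - t + g \<le> (a - 2 + nu p t) * g + g * g" unfolding e1 ag jdef using IK t1 jt jdef by linarith
        show ?thesis using X1 X2 X3 by blast
      next
        assume n1: "nu p t = 1" and tt: "2*g + 1 \<le> t"
        have e1: "a - 2 + nu p t = a - 1" using n1 a2 by simp
        have e2: "k + 1 - (a - 1) = i + 1" using a_def ik by simp
        have ag1: "(a - 1) * g = a * g - g" by (simp add: diff_mult_distrib)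
        have X1: "a - 2 + nu p t \<le> k + 1" "1 \<le> a - 2 + nu p t \<or> j - t = 0" using e1 a_def a2 by auto
        have X2: "g * (k + 1 - (a - 2 + nu p t)) \<le> i * g + t" unfolding e1 e2 using tt by (simp add: algebra_simps)
        have X3: "j - t + g \<le> (a - 2 + nu p t) * g + g * g" unfolding e1 ag1 ag using IK tt jt jdef by linarith
        show ?thesis using X1 X2 X3 by blast
      next
        assume n0: "nu p t = 0" and tt: "t = g*g + 2*g"
        have a3: "3 \<le> a"
        proof (rule ccontr)
          assume "\<not> 3 \<le> a" then have "a = 2" using a2 by simp
          then have "a * g = 2 * g" by simp
          then have "I + g = K" using ag IK by linarith
          then have "j \<le> t" using jdef tt g1 by linarith
          then show False using jt by simp
        qed
        have e1: "a - 2 + nu p t = a - 2" using n0 by simp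
        have e2: "k + 1 - (a - 2) = i + 2" using a_def ik a3 by simp
        have ag1: "(a - 2) * g = a * g - 2 * g" by (simp add: diff_mult_distrib)
        have a2g: "2 * g \<le> a * g" using a2 by (intro mult_le_mono1)
        have X1: "a - 2 + nu p t \<le> k + 1" "1 \<le> a - 2 + nu p t \<or> j - t = 0" using e1 a_def a3 by auto
        have X2: "g * (k + 1 - (a - 2 + nu p t)) \<le> i * g + t" unfolding e1 e2 using tt by (simp add: algebra_simps)
        have X3: "j - t + g \<le> (a - 2 + nu p t) * g + g * g" unfolding e1 ag1 using ag a2g IK tt jt jdef gg by linarith
        show ?thesis using X1 X2 X3 by blast
      qed
    have IHc: "mnm (of_nat p ^ (a - 2 + nu p t)) (i*g + t) p (j - t) \<in> GG"
      using rowp conds by blast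
    have "mnm (((- of_nat (U1 p)) ^ i * of_nat (dd p t)) * of_nat p ^ (a - 2 + nu p t)) (i*g + t) p (j - t) \<in> GG"
      using G_mnm_scale[OF IHc dZ] .
    then show ?thesis unfolding coef .
  qed
  have pp: "p \<le> p * p" by (rule le_square)
  have gp: "p - 1 < p * p" "0 < p * p" using p2[OF pr] pp by linarith+
  have gT: "g \<in> {..<p^2}" "0 \<in> {..<p^2}" using gp unfolding power2_eq_square lessThan_iff by blast+
  have g0: "0 \<noteq> g" using g1 by simp
  have X: "(\<lambda>z. mnm (c * of_nat (p^2 choose (0+1))) (i*g + 0) p (j - 0) z
             + mnm (c * of_nat (p^2 choose (g+1))) (i*g + g) p (j - g) z) \<in> GG"
    by (rule G_split2[OF _ gT(2) gT(1) g0 rel]) (use others in auto)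
  have c0: "c * of_nat (p^2 choose (0+1)) = (- of_nat (U1 p)) ^ i * of_nat p ^ (k+1-i)"
  proof -
    have a22: "a - 2 + 2 = a" using a2 by simp
    have "(of_nat p :: rat) ^ (a - 2) * of_nat p ^ 2 = of_nat p ^ a"
      unfolding power_add[symmetric] a22 ..
    then show ?thesis unfolding c_def a_def[symmetric] by (simp add: mult.assoc)
  qed
  have cg: "c * of_nat (p^2 choose (g+1)) = - ((- of_nat (U1 p)) ^ (Suc i) * of_nat p ^ (k+1-Suc i))"
  proof -
    have u: "p^2 choose (g+1) = p * U1 p" using U1_prop(1)[OF pr] pg by simp
    have a21: "a - 1 = Suc (a - 2)" using a2 by simp
    have "(of_nat p :: rat) ^ (a - 2) * of_nat p = of_nat p ^ (a - 1)"
      unfolding a21 power_Suc2 ..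
    moreover have "k + 1 - Suc i = a - 1" using a_def by simp
    ultimately show ?thesis unfolding c_def u by (simp add: field_simps)
  qed
  have jg: "j - g = NN - Suc i * g" unfolding j_def by (simp only: diff_diff_left mult_Suc add.commute)
  have eg: "i*g + g = Suc i * g" by simp
  show ?case
  proof (rule G_eq[OF G_add[OF IH X]])
    fix z
    show "mnm (of_nat p ^ (k+1)) 0 p NN z - mnm ((- of_nat (U1 p)) ^ i * of_nat p ^ (k+1-i)) (i*g) p (NN - i*g) z
        + (mnm (c * of_nat (p^2 choose (0+1))) (i*g + 0) p (j - 0) z
             + mnm (c * of_nat (p^2 choose (g+1))) (i*g + g) p (j - g) z)
        = mnm (of_nat p ^ (k+1)) 0 p NN z - mnm ((- of_nat (U1 p)) ^ Suc i * of_nat p ^ (k+1-Suc i)) (Suc i*g) p (NN - Suc i*g) z"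
      unfolding c0 cg jg eg j_def by (simp add: mnm_def minus_monom[symmetric] ac_simps)
  qed
qed

lemma sum_split_p:
  "(\<Sum>t<p. f t) = f 0 + f g + (\<Sum>t\<in>{1..<g}. f t)"
proof -
  have "{..<p} = insert 0 (insert g {1..<g})" using pg g1 by auto
  then show ?thesis using g1 by (simp add: add.assoc)
qed

lemma final_G:
  defines "Y \<equiv> ((p^(k+1) - 1) choose (p - 1))"
  shows "(\<lambda>z. bd p k (\<lambda>z. br p NN z + [:of_nat Y / of_nat (U1 p):] * br 1 (NN + g) z) z
          - mnm ((- of_nat (U1 p)) ^ k * of_nat p) (k*g) p (g*g+1) z) \<in> GG"
proof -
  define c where "c = (of_nat Y / of_nat (U1 p) :: rat)"
  have p1: "1 \<le> p" using p2[OF pr] by simp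
  have pq: "p \<le> p^(k+1)" by (rule self_le_power) (use p2[OF pr] in auto)
  have q1: "1 \<le> p^(k+1)" using pq p1 by linarith
  have bdL: "bd p k (\<lambda>z. br p NN z + [:c:] * br 1 (NN + g) z)
      = (\<lambda>z. (\<Sum>t<p. acoef p t (k+1) * br (p-t) NN z) + [:c:] * (acoef p 0 (k+1) * br 1 (NN + g) z))"
  proof -
    have "bd p k (\<lambda>z. br p NN z + [:c:] * br 1 (NN + g) z)
        = (\<lambda>z. bd p k (br p NN) z + bd p k (\<lambda>z. [:c:] * br 1 (NN + g) z) z)"
      using bd_add[of p k "br p NN" "\<lambda>z. [:c:] * br 1 (NN + g) z"] by simp
    also have "\<dots> = (\<lambda>z. bd p k (br p NN) z + [:c:] * bd p k (br 1 (NN + g)) z)"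
      using bd_smul[of p k "[:c:]" "br 1 (NN + g)"] by simp
    finally show ?thesis unfolding bd_br[OF p1 pq] bd_br[OF order_refl q1] by simp
  qed
  have P1: "(\<lambda>z. mnm (of_nat p ^ (k+1)) 0 p NN z
      - mnm ((- of_nat (U1 p)) ^ k * of_nat p) (k*g) p (g*g+1) z) \<in> GG"
    using mainit[of k] by simp
  have P2: "(\<lambda>z. \<Sum>t\<in>{1..<g}. acoef p t (k+1) * br (p-t) NN z) \<in> GG"
  proof (rule G_sum)
    fix t assume t: "t \<in> {1..<g}"
    have tl: "t + 1 < p" using t pg by auto
    have nd: "\<not> p dvd (t+1)" using tl by (auto dest: dvd_imp_le)
    obtain d where d: "p^(k+1) choose (t+1) = p^(k+1) * d"
      using binom_pow_dvd[OF pr _ nd, of "k+1"] by (auto elim: dvdE)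
    have "p - t \<le> p - 1" "1 \<le> p - t" using t tl by auto
    moreover have "NN \<le> NN + g" "1 \<le> NN" by simp_all
    ultimately have "mnm (of_nat p ^ (k+1)) t (p-t) NN \<in> GG"
      by (intro low_rows) auto
    then have "mnm (of_nat d * of_nat p ^ (k+1)) t (p-t) NN \<in> GG"
      by (rule G_mnm_scale) simp
    then show "(\<lambda>z. acoef p t (k+1) * br (p-t) NN z) \<in> GG"
      unfolding mnm_def acoef_def d by (simp add: mult.commute)
  qed simp
  define M where "M = NN + g"
  define c3 where "c3 = c * of_nat p ^ (k - 1)"
  have YZ: "inZp p c" unfolding c_def using inZp_mult[OF inZp_nat inv_u1[OF pr]] by (simp add: divide_inverse)
  have c3Z: "inZp p c3" unfolding c3_def by (intro inZp_mult YZ inZp_power inZp_nat)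
  have rel: "(\<lambda>z. \<Sum>t<p^2. mnm (c3 * of_nat (p^2 choose (t+1))) (0 + t) 1 (M - t) z) \<in> GG"
    using G_relem[OF c3Z, of 0 1 M k p NN] unfolding rel_expand .
  have gg: "1 \<le> g * g" using g1 by simp
  have others: "mnm (c3 * of_nat (p^2 choose (t+1))) (0 + t) 1 (M - t) \<in> GG"
    if t: "t \<in> {..<p^2}" "t \<noteq> 0" "t \<noteq> g" for t
  proof (cases "M \<le> t")
    case True then show ?thesis by (simp add: G_zero)
  next
    case jt: False
    have tl: "t < p^2" "t \<noteq> p - 1" using t by auto
    have Ct: "p^2 choose (t+1) = dd p t * p ^ (nu p t)" using nu_dd[OF pr tl] .
    have k1: "1 \<le> k" using k2 by simp
    have coef: "c3 * of_nat (p^2 choose (t+1)) = (c * of_nat (dd p t)) * of_nat p ^ (k - 1 + nu p t)"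
      unfolding Ct c3_def by (simp add: power_add field_simps)
    have dZ: "inZp p (c * of_nat (dd p t))" by (intro inZp_mult YZ inZp_nat)
    have nc: "nu p t = 2 \<or> (nu p t = 1 \<and> 2*g + 1 \<le> t) \<or> (nu p t = 0 \<and> t = g*g + 2*g)"
      using nu_cases[OF pr tl] by simp
    have Mdef: "M = g*g + k*g + g + 1" unfolding M_def by simp
    have conds: "k - 1 + nu p t \<le> k + 1 \<and> (1 \<le> k - 1 + nu p t \<or> M - t = 0) \<and>
           g * (k + 1 - (k - 1 + nu p t)) \<le> t \<and>
           M - t \<le> (k - 1 + nu p t) * g + g * g"
      using nc
    proof (elim disjE conjE)
      assume n2: "nu p t = 2"
      have e1: "k - 1 + nu p t = k + 1" using n2 k1 by simp
      have t1: "1 \<le> t" using t by simp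
      have kg: "(k+1)*g = k*g + g" by simp
      have X3: "M - t \<le> (k + 1) * g + g * g" using Mdef t1 kg by linarith
      show ?thesis unfolding e1 using X3 by simp
    next
      assume n1: "nu p t = 1" and tt: "2*g + 1 \<le> t"
      have e1: "k - 1 + nu p t = k" using n1 k1 by simp
      have X3: "M - t \<le> k * g + g * g" using Mdef tt by linarith
      show ?thesis unfolding e1 using X3 tt k1 by simp
    next
      assume n0: "nu p t = 0" and tt: "t = g*g + 2*g"
      have e1: "k - 1 + nu p t = k - 1" using n0 by simp
      have e2: "k + 1 - (k - 1) = 2" using k1 by simp
      have km: "(k - 1) * g + g = k * g" using k1 by (cases k) auto
      have X3: "M - t \<le> (k - 1) * g + g * g" using Mdef tt gg km by linarith
      have X1: "1 \<le> k - 1" using k2 by simp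
      have X4: "k - 1 \<le> k + 1" by simp
      have X5: "g * 2 \<le> t" using tt by simp
      show ?thesis unfolding e1 e2 using X3 X1 X4 X5 by blast
    qed
    have IHc: "mnm (of_nat p ^ (k - 1 + nu p t)) (0 + t) 1 (M - t) \<in> GG"
      using row1 conds by simp
    have "mnm ((c * of_nat (dd p t)) * of_nat p ^ (k - 1 + nu p t)) (0 + t) 1 (M - t) \<in> GG"
      using G_mnm_scale[OF IHc dZ] .
    then show ?thesis unfolding coef .
  qed
  have pp: "p \<le> p * p" by (rule le_square)
  have gp: "p - 1 < p * p" "0 < p * p" using p2[OF pr] pp by linarith+
  have gT: "g \<in> {..<p^2}" "0 \<in> {..<p^2}" using gp unfolding power2_eq_square lessThan_iff by blast+
  have g0: "0 \<noteq> g" using g1 by simp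
  have P3: "(\<lambda>z. mnm (c3 * of_nat (p^2 choose (0+1))) (0 + 0) 1 (M - 0) z
             + mnm (c3 * of_nat (p^2 choose (g+1))) (0 + g) 1 (M - g) z) \<in> GG"
    by (rule G_split2[OF _ gT(2) gT(1) g0 rel]) (use others in auto)
  have c30: "c3 * of_nat (p^2 choose (0+1)) = c * of_nat p ^ (k+1)"
  proof -
    have kk: "k - 1 + 2 = k + 1" using k2 by simp
    have "(of_nat p :: rat) ^ (k - 1) * of_nat p ^ 2 = of_nat p ^ (k+1)"
      unfolding power_add[symmetric] kk ..
    then show ?thesis unfolding c3_def by (simp add: mult.assoc)
  qed
  have c3g: "c3 * of_nat (p^2 choose (g+1)) = of_nat (p^(k+1) choose p)"
  proof -
    have u: "p^2 choose (g+1) = p * U1 p" using U1_prop(1)[OF pr] pg by simp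
    have y: "p^(k+1) choose p = p^k * Y" unfolding Y_def using binom_pk_p[OF pr, of k] by simp
    have kk: "k = Suc (k - 1)" using k2 by simp
    have "(of_nat p :: rat) ^ (k - 1) * of_nat p = of_nat p ^ k"
      by (subst (2) kk) (simp only: power_Suc2)
    then show ?thesis unfolding c3_def c_def u y using U1_pos[OF pr]
      by (simp add: field_simps)
  qed
  have Mg: "M - g = NN" unfolding M_def by simp
  have q1': "p^(k+1) choose (0+1) = p^(k+1)" by simp
  have gp1: "g + 1 = p" "p - g = 1" using pg by simp_all
  show ?thesis unfolding c_def[symmetric] bdL
  proof (rule G_eq[OF G_add[OF G_add[OF P1 P2] P3]])
    fix z
    have e1: "acoef p 0 (k+1) * br (p-0) NN z = mnm (of_nat p ^ (k+1)) 0 p NN z"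
      by (simp add: acoef_def mnm_def of_nat_power)
    have e2: "acoef p g (k+1) * br (p-g) NN z = mnm (of_nat (p^(k+1) choose p)) (0 + g) 1 (M - g) z"
      unfolding acoef_def mnm_def gp1 Mg by simp
    have e3: "[:c:] * (acoef p 0 (k+1) * br 1 (NN + g) z) = mnm (c * of_nat p ^ (k+1)) (0 + 0) 1 (M - 0) z"
      by (simp add: acoef_def mnm_def M_def monom_0[symmetric] mult_monom mult.assoc[symmetric] of_nat_power)
    define A where "A = mnm (of_nat p ^ (k+1)) 0 p NN z"
    define B where "B = mnm ((- of_nat (U1 p)) ^ k * of_nat p) (k*g) p (g*g+1) z"
    define S where "S = (\<Sum>t\<in>{1..<g}. acoef p t (k+1) * br (p-t) NN z)"
    define C where "C = mnm (c * of_nat p ^ (k+1)) (0 + 0) 1 (M - 0) z"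
    define D where "D = mnm (of_nat (p^(k+1) choose p)) (0 + g) 1 (M - g) z"
    have "A - B + S + (C + D) = (A + D + S) + C - B" by (simp add: algebra_simps)
    then show "mnm (of_nat p ^ (k+1)) 0 p NN z - mnm ((- of_nat (U1 p)) ^ k * of_nat p) (k*g) p (g*g+1) z
        + (\<Sum>t\<in>{1..<g}. acoef p t (k+1) * br (p-t) NN z)
        + (mnm (c3 * of_nat (p^2 choose (0+1))) (0 + 0) 1 (M - 0) z
             + mnm (c3 * of_nat (p^2 choose (g+1))) (0 + g) 1 (M - g) z)
      = (\<Sum>t<p. acoef p t (k+1) * br (p-t) NN z) + [:c:] * (acoef p 0 (k+1) * br 1 (NN + g) z)
        - mnm ((- of_nat (U1 p)) ^ k * of_nat p) (k*g) p (g*g+1) z"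
      unfolding sum_split_p c30 c3g e1 e2 e3 A_def[symmetric] B_def[symmetric] S_def[symmetric]
        C_def[symmetric] D_def[symmetric] .
  qed
qed

end



theorem corollary5p3:
  fixes p k :: nat
  assumes "prime p" and "2 \<le> k"
  defines "g1 \<equiv> p - 1"
  defines "u1 \<equiv> (of_nat ((p ^ 2) choose p) / of_nat p :: rat)"
  defines "y1 \<equiv> (of_nat ((p ^ (k + 1)) choose p) / of_nat (p ^ k) :: rat)"
  shows "\<exists>u x. unitZp p u \<and> lower_filt p k x p (g1 ^ 2 + k * g1 + 1) \<and>
    eqM p
      (bd p k (\<lambda>z. br p (g1 ^ 2 + k * g1 + 1) z
                 + [:y1 / u1:] * br 1 (g1 ^ 2 + (k + 1) * g1 + 1) z))
      (\<lambda>z. [:u:] * of_nat p * monom 1 (k * g1) * br p (g1 ^ 2 + 1) z + bd p k x z)"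
proof -
  note pr = assms(1) and k2 = assms(2)
  define Y where "Y = ((p^(k+1) - 1) choose (p - 1))"
  define U where "U = U1 p"
  define u where "u = ((- of_nat U) ^ k :: rat)"
  have p2: "2 \<le> p" using p2[OF pr] .
  have y1: "y1 = of_nat Y"
  proof -
    have "p ^ (k+1) choose p = p^k * Y" unfolding Y_def using binom_pk_p[OF pr, of k] by simp
    moreover have "p^k \<noteq> 0" using p2 by simp
    ultimately show ?thesis unfolding y1_def by simp
  qed
  have u1: "u1 = of_nat U" unfolding u1_def U_def using u1_eq[OF pr] .
  have n1: "g1 ^ 2 + k * g1 + 1 = (p-1)*(p-1) + k*(p-1) + 1" unfolding g1_def by (simp add: power2_eq_square)
  have n2: "g1 ^ 2 + (k + 1) * g1 + 1 = (p-1)*(p-1) + k*(p-1) + 1 + (p-1)"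
    unfolding g1_def power2_eq_square distrib_right mult_1_left by (simp only: add_ac)
  have n3: "g1 ^ 2 + 1 = (p-1)*(p-1) + 1" unfolding g1_def by (simp add: power2_eq_square)
  have G: "(\<lambda>z. bd p k (\<lambda>z. br p ((p-1)*(p-1) + k*(p-1) + 1) z
              + [:of_nat Y / of_nat U:] * br 1 ((p-1)*(p-1) + k*(p-1) + 1 + (p-1)) z) z
          - mnm ((- of_nat U) ^ k * of_nat p) (k*(p-1)) p ((p-1)*(p-1)+1) z)
        \<in> Gs p k p ((p-1)*(p-1) + k*(p-1) + 1)"
    using final_G[OF pr k2] unfolding Y_def U_def .
  then obtain x where x: "lower_filt p k x p ((p-1)*(p-1) + k*(p-1) + 1)"
    "(\<lambda>z. (bd p k (\<lambda>z. br p ((p-1)*(p-1) + k*(p-1) + 1) z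
              + [:of_nat Y / of_nat U:] * br 1 ((p-1)*(p-1) + k*(p-1) + 1 + (p-1)) z) z
          - mnm ((- of_nat U) ^ k * of_nat p) (k*(p-1)) p ((p-1)*(p-1)+1) z) - bd p k x z)
      \<in> relations p"
    unfolding Gs_def by blast
  have U0: "U \<noteq> 0" unfolding U_def using U1_pos[OF pr] .
  have unit: "unitZp p u"
  proof -
    have "u \<noteq> 0" unfolding u_def using U0 by simp
    moreover have "inZp p u"
    proof -
      have "(- of_nat U :: rat) = of_int (- int U)" by simp
      then show ?thesis unfolding u_def using inZp_power[OF inZp_int, of p "- int U" k] by simp
    qed
    moreover have "inZp p (inverse u)"
    proof -
      have "inverse u = (- (1 / of_nat U)) ^ k" unfolding u_def
        by (simp add: power_inverse[symmetric] divide_inverse)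
      then show ?thesis using inZp_power[OF inZp_uminus[OF inv_u1[OF pr]]] unfolding U_def by simp
    qed
    ultimately show ?thesis unfolding unitZp_def by blast
  qed
  have eq: "(\<lambda>z. bd p k (\<lambda>z. br p (g1 ^ 2 + k * g1 + 1) z
                 + [:y1 / u1:] * br 1 (g1 ^ 2 + (k + 1) * g1 + 1) z) z
         - ([:u:] * of_nat p * monom 1 (k * g1) * br p (g1 ^ 2 + 1) z + bd p k x z))
      = (\<lambda>z. (bd p k (\<lambda>z. br p ((p-1)*(p-1) + k*(p-1) + 1) z
              + [:of_nat Y / of_nat U:] * br 1 ((p-1)*(p-1) + k*(p-1) + 1 + (p-1)) z) z
          - mnm ((- of_nat U) ^ k * of_nat p) (k*(p-1)) p ((p-1)*(p-1)+1) z) - bd p k x z)"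
  proof
    fix z
    have m: "[:u:] * of_nat p * monom 1 (k * g1) = monom ((- of_nat U) ^ k * of_nat p) (k*(p-1))"
      unfolding u_def g1_def by (simp add: monom_0[symmetric] of_nat_monom mult_monom)
    show "bd p k (\<lambda>z. br p (g1 ^ 2 + k * g1 + 1) z
                 + [:y1 / u1:] * br 1 (g1 ^ 2 + (k + 1) * g1 + 1) z) z
         - ([:u:] * of_nat p * monom 1 (k * g1) * br p (g1 ^ 2 + 1) z + bd p k x z)
      = (bd p k (\<lambda>z. br p ((p-1)*(p-1) + k*(p-1) + 1) z
              + [:of_nat Y / of_nat U:] * br 1 ((p-1)*(p-1) + k*(p-1) + 1 + (p-1)) z) z
          - mnm ((- of_nat U) ^ k * of_nat p) (k*(p-1)) p ((p-1)*(p-1)+1) z) - bd p k x z"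
      unfolding n1 n2 n3 y1 u1 m mnm_def by (simp add: algebra_simps)
  qed
  have "eqM p
      (bd p k (\<lambda>z. br p (g1 ^ 2 + k * g1 + 1) z
                 + [:y1 / u1:] * br 1 (g1 ^ 2 + (k + 1) * g1 + 1) z))
      (\<lambda>z. [:u:] * of_nat p * monom 1 (k * g1) * br p (g1 ^ 2 + 1) z + bd p k x z)"
    unfolding eqM_def eq using x(2) .
  moreover have "lower_filt p k x p (g1 ^ 2 + k * g1 + 1)" unfolding n1 using x(1) .
  ultimately show ?thesis using unit by blast
qed


end
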